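(* Let $K\subseteq\mathbb{R}^n$ be nonempty, compact and convex, let $F:K\to\mathbb{R}^n$ be continuously differentiable and strongly monotone, and let $\delta:K\to\mathbb{R}^n$ be such that $F+\delta$ is continuously differentiable and strongly monotone. Consider the dynamics with state-dependent cost disturbance $$\dot x(t)\in\beta(\tilde\pi(t))-x(t),\qquad \tilde\pi(t)=(F+\delta)(x(t)),\qquad \beta(\pi)=\arg\min_{y\in K}y^T\pi .$$ Then every solution converges to a perturbed equilibrium point $\tilde x^*$ (the solution of $VI(K,F+\delta)$), and there is $\alpha_1\in\mathcal{K}_\infty$ such that $$\|x^*-\tilde x^*\|\le \alpha_1^{-1}\big(h(\tilde x^* )\big),$$ where $x^*$ is the unique solution of the unperturbed variational inequality $VI(K,F)$ and $$h(x)=\max\Big\{(z-x)^T\delta(x):\ z\in\arg\min_{y\in K}y^TF(x)\Big\}.$$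
   Context: A point $x\in K$ solves the variational inequality $VI(K,G)$ for $G:K\to\mathbb{R}^n$ if $(y-x)^TG(x)\ge0$ for all $y\in K$. A map $G$ is strongly monotone on $K$ if there is $c>0$ with $(x-y)^T(G(x)-G(y))\ge c\|x-y\|^2$ for all $x,y\in K$. Solutions of the differential inclusion are Carathéodory solutions with $x(0)\in K$. $\mathcal{K}_\infty$: continuous strictly increasing unbounded functions $[0,\infty)\to[0,\infty)$ vanishing at $0$. *)

theory Defs
  imports "HOL-Analysis.Analysis"
begin

definition solves_VI :: "('a::euclidean_space) set \<Rightarrow> ('a \<Rightarrow> 'a) \<Rightarrow> 'a \<Rightarrow> bool" where
  "solves_VI K G x \<longleftrightarrow> x \<in> K \<and> (\<forall>y\<in>K. (y - x) \<bullet> G x \<ge> 0)"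

definition strongly_monotone_on :: "('a::euclidean_space) set \<Rightarrow> ('a \<Rightarrow> 'a) \<Rightarrow> bool" where
  "strongly_monotone_on K G \<longleftrightarrow>
     (\<exists>c>0. \<forall>x\<in>K. \<forall>y\<in>K. (x - y) \<bullet> (G x - G y) \<ge> c * (norm (x - y))\<^sup>2)"

definition C1_on :: "('a::euclidean_space) set \<Rightarrow> ('a \<Rightarrow> 'a) \<Rightarrow> bool" where
  "C1_on K G \<longleftrightarrow> (\<exists>G'. (\<forall>x\<in>K. (G has_derivative blinfun_apply (G' x)) (at x within K))
                         \<and> continuous_on K G')"

definition best_resp :: "('a::euclidean_space) set \<Rightarrow> 'a \<Rightarrow> 'a set" where
  "best_resp K p = {y \<in> K. \<forall>z\<in>K. y \<bullet> p \<le> z \<bullet> p}"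

definition class_K_inf :: "(real \<Rightarrow> real) \<Rightarrow> bool" where
  "class_K_inf \<alpha> \<longleftrightarrow> continuous_on {0..} \<alpha> \<and> strict_mono_on {0..} \<alpha> \<and> \<alpha> 0 = 0
                      \<and> (\<forall>M. \<exists>t\<ge>0. \<alpha> t > M)"

text \<open>Caratheodory solution on [0,\<infinity>) of  x' \<in> best_resp K (G (x t)) - x t  with x 0 \<in> K:
  x is absolutely continuous on every compact interval, i.e. the integral of a locally
  Lebesgue integrable v, and the inclusion holds for almost every t \<ge> 0.\<close>
definition caratheodory_sol :: "('a::euclidean_space) set \<Rightarrow> ('a \<Rightarrow> 'a) \<Rightarrow> (real \<Rightarrow> 'a) \<Rightarrow> bool" where
  "caratheodory_sol K G x \<longleftrightarrow> x 0 \<in> K \<and>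
     (\<exists>v. (\<forall>T\<ge>0. v absolutely_integrable_on {0..T}) \<and>
          (\<forall>t\<ge>0. x t = x 0 + integral {0..t} v) \<and>
          (\<exists>N. negligible N \<and> (\<forall>t\<in>{0..} - N. v t \<in> (\<lambda>b. b - x t) ` best_resp K (G (x t)))))"

definition hfun :: "('a::euclidean_space) set \<Rightarrow> ('a \<Rightarrow> 'a) \<Rightarrow> ('a \<Rightarrow> 'a) \<Rightarrow> 'a \<Rightarrow> real" where
  "hfun K F \<delta> x = Sup ((\<lambda>z. (z - x) \<bullet> \<delta> x) ` best_resp K (F x))"

end

theory Submission
  imports Defs
begin


lemma C1_cont:
  assumes "C1_on K G" shows "continuous_on K G"
proof -
  obtain G' where d: "\<forall>x\<in>K. (G has_derivative blinfun_apply (G' x)) (at x within K)"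
    using assms unfolding C1_on_def by blast
  show ?thesis unfolding continuous_on_eq_continuous_within
    using d has_derivative_continuous by blast
qed

lemma C1_lip:
  assumes "C1_on K G" "compact K" "convex K"
  shows "\<exists>L\<ge>0. \<forall>x\<in>K. \<forall>y\<in>K. norm (G x - G y) \<le> L * norm (x - y)"
proof -
  obtain G' where d: "\<forall>x\<in>K. (G has_derivative blinfun_apply (G' x)) (at x within K)"
    and c: "continuous_on K G'"
    using assms unfolding C1_on_def by blast
  have "bounded (G' ` K)" using compact_continuous_image[OF c assms(2)] compact_imp_bounded by blast
  then obtain B where B: "\<forall>x\<in>K. norm (G' x) \<le> B" unfolding bounded_iff by blast
  have "\<forall>x\<in>K. \<forall>y\<in>K. norm (G x - G y) \<le> max B 0 * norm (x - y)"
  proof (intro ballI)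
    fix x y assume "x \<in> K" "y \<in> K"
    show "norm (G x - G y) \<le> max B 0 * norm (x - y)"
    proof (rule differentiable_bound[OF assms(3), where f'="\<lambda>x. blinfun_apply (G' x)"])
      show "\<And>z. z \<in> K \<Longrightarrow> (G has_derivative blinfun_apply (G' z)) (at z within K)" using d by blast
      show "\<And>z. z \<in> K \<Longrightarrow> onorm (blinfun_apply (G' z)) \<le> max B 0"
        using B by (metis max.coboundedI1 norm_blinfun.rep_eq)
    qed fact+
  qed
  then show ?thesis by (intro exI[of _ "max B 0"]) auto
qed

lemma VI_exists:
  fixes K :: "'a::euclidean_space set"
  assumes "K \<noteq> {}" "compact K" "convex K" "continuous_on K G"
  shows "\<exists>x. solves_VI K G x"
proof -
  have cl: "closed K" using assms(2) compact_imp_closed by blast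
  let ?f = "\<lambda>x. closest_point K (x - G x)"
  have c1: "continuous_on K (\<lambda>x. x - G x)"
    using assms(4) by (intro continuous_on_diff continuous_on_id) 
  have c: "continuous_on K ?f"
    using continuous_on_compose2[OF continuous_on_closest_point[OF assms(3) cl assms(1)] c1, of UNIV]
    by simp
  have m: "?f \<in> K \<rightarrow> K" using closest_point_in_set[OF cl assms(1)] by blast
  obtain x where x: "x \<in> K" "?f x = x"
    using brouwer[OF assms(2,3,1) c m] by blast
  have "\<forall>y\<in>K. (y - x) \<bullet> G x \<ge> 0"
  proof
    fix y assume "y \<in> K"
    from closest_point_dot[OF assms(3) cl this, of "x - G x"] x(2)
    show "(y - x) \<bullet> G x \<ge> 0" by (simp add: inner_commute)
  qed
  then show ?thesis using x unfolding solves_VI_def by blast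
qed

lemma best_resp_nonempty:
  fixes K :: "'a::euclidean_space set"
  assumes "K \<noteq> {}" "compact K"
  shows "\<exists>y. y \<in> best_resp K p"
proof -
  have "continuous_on K (\<lambda>y. y \<bullet> p)" by (intro continuous_intros)
  from continuous_attains_inf[OF assms(2,1) this] show ?thesis
    unfolding best_resp_def by auto
qed

lemma bound_part:
  fixes K :: "'a::euclidean_space set"
  assumes "K \<noteq> {}" "compact K" "strongly_monotone_on K F"
    and xt: "solves_VI K (\<lambda>x. F x + \<delta> x) xt"
  shows "\<exists>\<alpha>1. class_K_inf \<alpha>1 \<and>
               (\<forall>xs. solves_VI K F xs \<longrightarrow>
                  norm (xs - xt) \<le> inv_into {0..} \<alpha>1 (hfun K F \<delta> xt))"
proof -
  obtain c where c: "c > 0" "\<forall>x\<in>K. \<forall>y\<in>K. (x - y) \<bullet> (F x - F y) \<ge> c * (norm (x - y))\<^sup>2"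
    using assms(3) unfolding strongly_monotone_on_def by blast
  define \<alpha> where "\<alpha> = (\<lambda>r::real. c * r\<^sup>2)"
  have K: "class_K_inf \<alpha>"
    unfolding class_K_inf_def
  proof (intro conjI)
    show "continuous_on {0..} \<alpha>" unfolding \<alpha>_def by (intro continuous_intros)
    show "strict_mono_on {0..} \<alpha>" unfolding \<alpha>_def strict_mono_on_def
    proof (intro allI impI)
      fix r s :: real assume a: "r \<in> {0..} \<and> s \<in> {0..} \<and> r < s"
      then have "r\<^sup>2 < s\<^sup>2" by (intro power_strict_mono) auto
      then show "c * r\<^sup>2 < c * s\<^sup>2" using c(1) by simp
    qed
    show "\<alpha> 0 = 0" by (simp add: \<alpha>_def)
    show "\<forall>M. \<exists>t\<ge>0. M < \<alpha> t"
    proof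
      fix M :: real
      let ?t = "\<bar>M\<bar> / c + 1"
      have t1: "?t \<ge> 1" using c(1) by simp
      have "?t \<le> ?t\<^sup>2" using mult_left_mono[OF t1, of ?t] t1 by (simp add: power2_eq_square)
      then have "c * ?t \<le> c * ?t\<^sup>2" using c(1) by (intro mult_left_mono) auto
      moreover have "c * ?t = \<bar>M\<bar> + c" using c(1) by (simp add: field_simps)
      ultimately have "M < \<alpha> ?t" unfolding \<alpha>_def using c(1) by linarith
      then show "\<exists>t\<ge>0. M < \<alpha> t" using t1 by (intro exI[of _ ?t]) auto
    qed
  qed
  have main: "norm (xs - xt) \<le> inv_into {0..} \<alpha> (hfun K F \<delta> xt)" if xs: "solves_VI K F xs" for xs
  proof -
    obtain z where z: "z \<in> best_resp K (F xt)" using best_resp_nonempty[OF assms(1,2)] by blast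
    have zK: "z \<in> K" and zmin: "\<forall>y\<in>K. z \<bullet> F xt \<le> y \<bullet> F xt" using z unfolding best_resp_def by auto
    have xtK: "xt \<in> K" and vt: "(z - xt) \<bullet> (F xt + \<delta> xt) \<ge> 0" using xt zK unfolding solves_VI_def by auto
    have xsK: "xs \<in> K" and vs: "(xt - xs) \<bullet> F xs \<ge> 0" using xs xtK unfolding solves_VI_def by auto
    have sm: "(xt - xs) \<bullet> (F xt - F xs) \<ge> c * (norm (xt - xs))\<^sup>2" using c(2) xtK xsK by blast
    have m1: "z \<bullet> F xt \<le> xs \<bullet> F xt" using zmin xsK by blast
    have key: "(z - xt) \<bullet> \<delta> xt \<ge> c * (norm (xs - xt))\<^sup>2"
      using vt sm vs m1 by (simp add: inner_simps norm_minus_commute)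
    have bd: "bdd_above ((\<lambda>z. (z - xt) \<bullet> \<delta> xt) ` best_resp K (F xt))"
    proof -
      have "bounded ((\<lambda>z. (z - xt) \<bullet> \<delta> xt) ` K)"
        by (intro compact_imp_bounded compact_continuous_image assms(2)) (intro continuous_intros)
      then have "bdd_above ((\<lambda>z. (z - xt) \<bullet> \<delta> xt) ` K)" by (rule bounded_imp_bdd_above)
      then show ?thesis by (rule bdd_above_mono) (auto simp: best_resp_def)
    qed
    have hge: "hfun K F \<delta> xt \<ge> c * (norm (xs - xt))\<^sup>2"
      unfolding hfun_def using cSup_upper[OF imageI[OF z] bd] key by linarith
    define y where "y = hfun K F \<delta> xt"
    have "0 \<le> c * (norm (xs - xt))\<^sup>2" using c(1) by simp
    then have y0: "y \<ge> 0" using hge unfolding y_def by linarith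
    have "y \<in> \<alpha> ` {0..}"
    proof
      show "y = \<alpha> (sqrt (y / c))" unfolding \<alpha>_def using y0 c(1) by simp
    qed (use y0 c(1) in auto)
    then have r: "inv_into {0..} \<alpha> y \<in> {0..}" "\<alpha> (inv_into {0..} \<alpha> y) = y"
      by (rule inv_into_into, rule f_inv_into_f)
    define r where "r = inv_into {0..} \<alpha> y"
    have "c * r\<^sup>2 \<ge> c * (norm (xs - xt))\<^sup>2" using r hge unfolding r_def y_def \<alpha>_def by simp
    then have "r\<^sup>2 \<ge> (norm (xs - xt))\<^sup>2" using c(1) by simp
    then have "norm (xs - xt) \<le> r" using r(1) unfolding r_def
      by (meson atLeast_iff norm_ge_zero power2_le_imp_le)
    then show ?thesis unfolding r_def y_def .
  qed
  show ?thesis using K main by blast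
qed



lemma integral_le_ae:
  fixes f g :: "'n::euclidean_space \<Rightarrow> real"
  assumes "f integrable_on S" "g integrable_on S" "negligible N" "\<And>x. x \<in> S - N \<Longrightarrow> f x \<le> g x"
  shows "integral S f \<le> integral S g"
proof -
  define g' where "g' x = (if x \<in> N then f x else g x)" for x
  have e: "integral S g = integral S g'" by (rule integral_spike[OF assms(3)]) (simp add: g'_def)
  have i: "g' integrable_on S" by (rule integrable_spike[OF assms(2) assms(3)]) (simp add: g'_def)
  have "integral S f \<le> integral S g'"
    by (rule integral_le[OF assms(1) i]) (use assms(4) in \<open>auto simp: g'_def\<close>)
  then show ?thesis using e by simp
qed

lemma backward_lebesgue:
  fixes w :: "real \<Rightarrow> 'a::euclidean_space"
  assumes "\<And>a b. w integrable_on {a..b}"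
  obtains NL where "negligible NL"
    "\<And>\<tau> e. \<tau> \<notin> NL \<Longrightarrow> 0 < e \<Longrightarrow> \<exists>d>0. \<forall>h. 0 < h \<and> h < d \<longrightarrow>
        norm (integral {\<tau>-h..\<tau>} w /\<^sub>R h - w \<tau>) < e"
proof -
  let ?W = "\<lambda>y. w (-y)"
  have "?W integrable_on cbox a b" for a b
    using assms[of "-b" "-a"] Henstock_Kurzweil_Integration.integrable_reflect_real[where f=w and a="-b" and b="-a"] by simp
  then obtain N where N: "negligible N"
    "\<And>x e. \<lbrakk>x \<notin> N; 0 < e\<rbrakk> \<Longrightarrow> \<exists>d>0. \<forall>h. 0 < h \<and> h < d \<longrightarrow>
        norm (integral (cbox x (x + h *\<^sub>R One)) ?W /\<^sub>R h ^ DIM(real) - ?W x) < e"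
    using integrable_ccontinuous_explicit[of ?W] by blast
  have negl: "negligible (uminus ` N)"
    by (rule negligible_differentiable_image_negligible[OF _ N(1)]) (auto intro!: derivative_intros)
  show ?thesis
  proof (rule that[OF negl])
    fix \<tau> e :: real assume "\<tau> \<notin> uminus ` N" "0 < e"
    then have "-\<tau> \<notin> N" by (metis image_eqI minus_minus)
    from N(2)[OF this \<open>0 < e\<close>] obtain d where d: "d > 0"
      "\<forall>h. 0 < h \<and> h < d \<longrightarrow> norm (integral (cbox (-\<tau>) (-\<tau> + h *\<^sub>R One)) ?W /\<^sub>R h ^ DIM(real) - ?W (-\<tau>)) < e"
      by blast
    have "integral (cbox (-\<tau>) (-\<tau> + h *\<^sub>R One)) ?W = integral {\<tau>-h..\<tau>} w" for h
    proof -
      have "integral (cbox (-\<tau>) (-\<tau> + h *\<^sub>R One)) ?W = integral {-\<tau> .. -(\<tau>-h)} ?W"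
        by simp
      also have "\<dots> = integral {\<tau>-h..\<tau>} w" by (rule Henstock_Kurzweil_Integration.integral_reflect_real)
      finally show ?thesis .
    qed
    then show "\<exists>d>0. \<forall>h. 0 < h \<and> h < d \<longrightarrow> norm (integral {\<tau>-h..\<tau>} w /\<^sub>R h - w \<tau>) < e"
      using d by (intro exI[of _ d]) auto
  qed
qed

lemma lyap_integral:
  fixes \<phi> :: "real \<Rightarrow> real" and q :: "real \<Rightarrow> real \<Rightarrow> real" and hs :: "nat \<Rightarrow> real"
  assumes cont: "\<And>T. continuous_on {0..T} \<phi>" and s: "0 < s" "s \<le> t"
    and M: "negligible M"
    and pt: "\<And>h \<tau>. 0 < h \<Longrightarrow> h < s \<Longrightarrow> \<tau> \<in> {s..t} - M \<Longrightarrow> (\<phi> \<tau> - \<phi> (\<tau> - h)) / h + \<phi> \<tau> \<le> q h \<tau>"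
    and qint: "\<And>h. 0 < h \<Longrightarrow> h < s \<Longrightarrow> q h integrable_on {s..t}"
    and hs: "\<And>k. 0 < hs k \<and> hs k < s" "hs \<longlonglongrightarrow> 0"
    and qlim: "(\<lambda>k. integral {s..t} (q (hs k))) \<longlonglongrightarrow> 0"
  shows "\<phi> t - \<phi> s + integral {s..t} \<phi> \<le> 0"
proof -
  define \<Psi> where "\<Psi> u = integral {0..u} \<phi>" for u
  have der: "(\<Psi> has_real_derivative \<phi> u) (at u)" if "0 < u" for u
  proof -
    have "continuous_on {0..u+1} \<phi>" using cont by blast
    from integral_has_real_derivative[OF this, of u] that
    have "(\<Psi> has_real_derivative \<phi> u) (at u within {0..u+1})" unfolding \<Psi>_def by auto
    moreover have "at u within {0..u+1} = at u" using that by (intro at_within_Icc_at) auto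
    ultimately show ?thesis by simp
  qed
  have shiftint: "((\<lambda>\<tau>. \<phi> (\<tau> - h)) has_integral (\<Psi> (t - h) - \<Psi> (s - h))) {s..t}"
    if "0 \<le> h" "h < s" for h
  proof -
    have "((\<lambda>\<tau>. \<Psi> (\<tau> - h)) has_vector_derivative \<phi> (x - h)) (at x within {s..t})"
      if "x \<in> {s..t}" for x
    proof -
      have "0 < x - h" using that \<open>h < s\<close> by auto
      have "(\<Psi> has_real_derivative \<phi> (x - h)) (at (x + (-h)))" using der[OF \<open>0 < x - h\<close>] by simp
      then have "((\<lambda>\<tau>. \<Psi> (\<tau> + (-h))) has_real_derivative \<phi> (x - h)) (at x)" by (simp only: DERIV_shift)
      then show ?thesis
        by (simp add: has_real_derivative_iff_has_vector_derivative has_vector_derivative_at_within)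
    qed
    from fundamental_theorem_of_calculus[OF s(2) this] show ?thesis by simp
  qed
  have phiint: "(\<phi> has_integral (\<Psi> t - \<Psi> s)) {s..t}" using shiftint[of 0] s by simp
  have difflim: "(\<lambda>k. (\<Psi> u - \<Psi> (u - hs k)) / hs k) \<longlonglongrightarrow> \<phi> u" if "0 < u" for u
  proof -
    have l1: "((\<lambda>y. (\<Psi> y - \<Psi> u) / (y - u)) \<longlongrightarrow> \<phi> u) (at u)"
      using der[OF that] by (simp add: has_field_derivative_iff)
    have l2: "filterlim (\<lambda>k. u - hs k) (at u) sequentially"
      unfolding filterlim_at
    proof
      have "u - hs k \<in> UNIV \<and> u - hs k \<noteq> u" for k using hs(1)[of k] by simp
      then show "\<forall>\<^sub>F k in sequentially. u - hs k \<in> UNIV \<and> u - hs k \<noteq> u" by (intro always_eventually) blast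
      show "(\<lambda>k. u - hs k) \<longlonglongrightarrow> u" using tendsto_diff[OF tendsto_const hs(2), of u] by simp
    qed
    have "(\<lambda>k. (\<Psi> (u - hs k) - \<Psi> u) / ((u - hs k) - u)) \<longlonglongrightarrow> \<phi> u"
      using filterlim_compose[OF l1 l2] by (simp add: o_def)
    moreover have "(\<Psi> (u - hs k) - \<Psi> u) / ((u - hs k) - u) = (\<Psi> u - \<Psi> (u - hs k)) / hs k" for k
      using hs(1)[of k] by (simp add: field_simps)
    ultimately show ?thesis by simp
  qed
  define L where "L k = (\<Psi> t - \<Psi> (t - hs k)) / hs k - (\<Psi> s - \<Psi> (s - hs k)) / hs k + (\<Psi> t - \<Psi> s)" for k
  have Llim: "L \<longlonglongrightarrow> \<phi> t - \<phi> s + (\<Psi> t - \<Psi> s)"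
    unfolding L_def using s by (intro tendsto_intros difflim) auto
  have Lle: "L k \<le> integral {s..t} (q (hs k))" for k
  proof -
    let ?h = "hs k"
    have hk: "0 < ?h" "?h < s" using hs(1)[of k] by auto
    have hi: "((\<lambda>\<tau>. (\<phi> \<tau> - \<phi> (\<tau> - ?h)) / ?h + \<phi> \<tau>) has_integral L k) {s..t}"
    proof -
      have "((\<lambda>\<tau>. (\<phi> \<tau> - \<phi> (\<tau> - ?h)) / ?h + \<phi> \<tau>) has_integral
          ((\<Psi> t - \<Psi> s) - (\<Psi> (t - ?h) - \<Psi> (s - ?h))) / ?h + (\<Psi> t - \<Psi> s)) {s..t}"
        by (intro has_integral_add has_integral_divide has_integral_diff phiint shiftint) (use hk in auto)
      moreover have "((\<Psi> t - \<Psi> s) - (\<Psi> (t - ?h) - \<Psi> (s - ?h))) / ?h + (\<Psi> t - \<Psi> s) = L k"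
        unfolding L_def using hk by (simp add: field_simps)
      ultimately show ?thesis by simp
    qed
    have "integral {s..t} (\<lambda>\<tau>. (\<phi> \<tau> - \<phi> (\<tau> - ?h)) / ?h + \<phi> \<tau>) \<le> integral {s..t} (q ?h)"
      by (rule integral_le_ae[OF _ qint[OF hk] M]) (use hi has_integral_integrable pt hk in blast)+
    then show ?thesis using hi by (simp add: integral_unique)
  qed
  have "\<phi> t - \<phi> s + (\<Psi> t - \<Psi> s) \<le> 0"
    by (rule LIMSEQ_le[OF Llim qlim]) (use Lle in blast)
  then show ?thesis using phiint by (simp add: integral_unique)
qed



lemma invariance:
  fixes K :: "'a::euclidean_space set" and x w :: "real \<Rightarrow> 'a"
  assumes K: "compact K" "convex K" and x0: "x 0 \<in> K"
    and cont: "\<And>T. continuous_on {0..T} x"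
    and wint: "\<And>T. 0 \<le> T \<Longrightarrow> w integrable_on {0..T}"
    and xw: "\<And>t. 0 \<le> t \<Longrightarrow> x t = x 0 + integral {0..t} w"
    and N: "negligible N" and wb: "\<And>\<tau>. 0 \<le> \<tau> \<Longrightarrow> \<tau> \<notin> N \<Longrightarrow> \<exists>b\<in>K. w \<tau> = b - x \<tau>"
    and t: "0 \<le> t"
  shows "x t \<in> K"
proof (rule ccontr)
  assume "x t \<notin> K"
  then obtain a d where ad: "a \<bullet> x t < d" "\<forall>y\<in>K. a \<bullet> y > d"
    using separating_hyperplane_closed_point[OF K(2) compact_imp_closed[OF K(1)]] by blast
  define u where "u \<tau> = d - a \<bullet> x \<tau>" for \<tau>
  have ut: "u t > 0" using ad(1) unfolding u_def by simp
  have u0: "u 0 < 0" using ad(2) x0 unfolding u_def by auto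
  have contu: "continuous_on {0..t} u" unfolding u_def by (intro continuous_intros cont)
  define S where "S = {0..t} \<inter> u -` {..0}"
  have clS: "closed S" unfolding S_def by (intro continuous_closed_preimage contu) auto
  have S0: "0 \<in> S" using u0 t unfolding S_def by auto
  have bdS: "bdd_above S" unfolding S_def by (rule bdd_aboveI[of _ t]) auto
  define t0 where "t0 = Sup S"
  have t0S: "t0 \<in> S" unfolding t0_def using closed_contains_Sup[OF _ bdS clS] S0 by blast
  then have t0: "0 \<le> t0" "t0 \<le> t" "u t0 \<le> 0" unfolding S_def by auto
  have t0t: "t0 < t" using t0 ut by (cases "t0 = t") auto
  have pos: "u \<tau> > 0" if "t0 < \<tau>" "\<tau> \<le> t" for \<tau>
  proof (rule ccontr)
    assume "\<not> u \<tau> > 0"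
    then have "\<tau> \<in> S" unfolding S_def using that t0 by auto
    then have "\<tau> \<le> t0" unfolding t0_def using cSup_upper[OF _ bdS] by blast
    then show False using that by simp
  qed
  have wi: "w integrable_on {0..t}" using wint t .
  have wi2: "w integrable_on {t0..t}" by (rule integrable_on_subinterval[OF wi]) (use t0 in auto)
  have "x t - x t0 = integral {t0..t} w"
    using xw[OF t] xw[OF t0(1)] Henstock_Kurzweil_Integration.integral_combine[OF t0(1) t0(2) wi] by (simp add: algebra_simps)
  moreover have "u t - u t0 = - (a \<bullet> (x t - x t0))" unfolding u_def by (simp add: inner_diff_right)
  ultimately have "u t - u t0 = - (a \<bullet> integral {t0..t} w)" by simp
  also have "a \<bullet> integral {t0..t} w = integral {t0..t} (\<lambda>\<tau>. a \<bullet> w \<tau>)"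
    using integral_linear[OF wi2 bounded_linear_inner_right[of a]] by (simp add: o_def)
  finally have ud: "u t - u t0 = - integral {t0..t} (\<lambda>\<tau>. a \<bullet> w \<tau>)" .
  have "integral {t0..t} (\<lambda>\<tau>. 0) \<le> integral {t0..t} (\<lambda>\<tau>. a \<bullet> w \<tau>)"
  proof (rule integral_le_ae[where N="N \<union> {t0}"])
    show "(\<lambda>\<tau>. a \<bullet> w \<tau>) integrable_on {t0..t}"
      using integrable_linear[OF wi2 bounded_linear_inner_right[of a]] by (simp add: o_def)
    show "negligible (N \<union> {t0})" using N by simp
    fix \<tau> assume \<tau>: "\<tau> \<in> {t0..t} - (N \<union> {t0})"
    then have "0 \<le> \<tau>" "\<tau> \<notin> N" "t0 < \<tau>" "\<tau> \<le> t" using t0 by auto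
    then obtain b where b: "b \<in> K" "w \<tau> = b - x \<tau>" using wb by blast
    have "a \<bullet> w \<tau> = a \<bullet> b - a \<bullet> x \<tau>" using b by (simp add: inner_diff_right)
    also have "\<dots> > u \<tau>" using ad(2) b(1) unfolding u_def by auto
    finally show "0 \<le> a \<bullet> w \<tau>" using pos[OF \<open>t0 < \<tau>\<close> \<open>\<tau> \<le> t\<close>] by simp
  qed (rule integrable_0)
  then have "u t \<le> u t0" using ud by simp
  then show False using ut t0(3) by simp
qed



lemma danskin_step:
  fixes xt xs b p ps :: "'a::real_inner" and h ft fs :: real
  assumes h: "h > 0"
    and A: "ft - fs \<le> (xt - b) \<bullet> p - (xs - b) \<bullet> ps"
    and eq: "ft = (xt - b) \<bullet> p"
    and mono: "(xt - xs) \<bullet> (p - ps) \<ge> 0"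
  shows "(ft - fs) / h + ft \<le> ((xt - xs) /\<^sub>R h - (b - xt)) \<bullet> ((p - ps) /\<^sub>R h + p)"
proof -
  define D where "D = xt - xs"
  define Dp where "Dp = p - ps"
  define w where "w = b - xt"
  have e1: "h * (((xt - xs) /\<^sub>R h - (b - xt)) \<bullet> ((p - ps) /\<^sub>R h + p))
      = (1/h) * (D \<bullet> Dp) - w \<bullet> Dp + D \<bullet> p - h * (w \<bullet> p)"
    using h unfolding D_def[symmetric] Dp_def[symmetric] w_def[symmetric]
    by (simp add: inner_simps field_simps)
  have e2: "(xt - b) \<bullet> p - (xs - b) \<bullet> ps + h * ft = - (w \<bullet> Dp) + D \<bullet> p - D \<bullet> Dp - h * (w \<bullet> p)"
    unfolding eq D_def Dp_def w_def by (simp add: inner_simps algebra_simps)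
  have "D \<bullet> Dp \<ge> 0" using mono unfolding D_def Dp_def .
  then have "(1/h) * (D \<bullet> Dp) + D \<bullet> Dp \<ge> 0" using h by simp
  then have "ft - fs + h * ft \<le> h * (((xt - xs) /\<^sub>R h - (b - xt)) \<bullet> ((p - ps) /\<^sub>R h + p))"
    using A e1 e2 by linarith
  then show ?thesis using h by (simp add: field_simps)
qed

lemma integrable_all:
  fixes w :: "real \<Rightarrow> 'a::euclidean_space"
  assumes wint: "\<And>T. 0 \<le> T \<Longrightarrow> w integrable_on {0..T}" and w0: "\<And>\<tau>. \<tau> < 0 \<Longrightarrow> w \<tau> = 0"
  shows "w integrable_on {a..b}"
proof -
  have i1: "w integrable_on {min a 0..0}"
    by (rule integrable_spike_finite[of "{0}" _ _ "\<lambda>_. 0"]) (auto simp: w0)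
  have i2: "w integrable_on {0..max b 0}" by (rule wint) simp
  have "w integrable_on {min a 0..max b 0}"
    by (rule Henstock_Kurzweil_Integration.integrable_combine[OF _ _ i1 i2]) auto
  then show ?thesis by (rule integrable_on_subinterval) auto
qed



lemma traj_converges:
  fixes K :: "'a::euclidean_space set" and G :: "'a \<Rightarrow> 'a" and x :: "real \<Rightarrow> 'a"
  assumes K: "K \<noteq> {}" "compact K" "convex K"
    and contG: "continuous_on K G"
    and lipG: "L \<ge> 0" "\<forall>y\<in>K. \<forall>z\<in>K. norm (G y - G z) \<le> L * norm (y - z)"
    and smG: "c > 0" "\<forall>y\<in>K. \<forall>z\<in>K. (y - z) \<bullet> (G y - G z) \<ge> c * (norm (y - z))\<^sup>2"
    and xt: "solves_VI K G xt"
    and sol: "caratheodory_sol K G x"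
  shows "(x \<longlongrightarrow> xt) at_top"
proof -
  obtain v N where x0: "x 0 \<in> K" and vint: "\<And>T. T \<ge> 0 \<Longrightarrow> v absolutely_integrable_on {0..T}"
    and xv: "\<And>t. t \<ge> 0 \<Longrightarrow> x t = x 0 + integral {0..t} v" and N: "negligible N"
    and vb: "\<And>t. t \<in> {0..} - N \<Longrightarrow> v t \<in> (\<lambda>b. b - x t) ` best_resp K (G (x t))"
    using sol unfolding caratheodory_sol_def by blast
  define w where "w \<tau> = (if 0 \<le> \<tau> \<and> \<tau> \<notin> N then v \<tau> else 0)" for \<tau>
  have vi: "v integrable_on {0..T}" if "0 \<le> T" for T using vint[OF that] absolutely_integrable_on_def by blast
  have wint: "w integrable_on {0..T}" if "0 \<le> T" for T
    by (rule integrable_spike[OF vi[OF that] N]) (simp add: w_def)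
  have xw: "x t = x 0 + integral {0..t} w" if "0 \<le> t" for t
  proof -
    have "integral {0..t} v = integral {0..t} w" by (rule integral_spike[OF N]) (simp add: w_def)
    then show ?thesis using xv[OF that] by simp
  qed
  have wb: "\<exists>b\<in>best_resp K (G (x \<tau>)). w \<tau> = b - x \<tau>" if "0 \<le> \<tau>" "\<tau> \<notin> N" for \<tau>
    using vb[of \<tau>] that by (auto simp: w_def)
  have wbK: "\<exists>b\<in>K. w \<tau> = b - x \<tau>" if "0 \<le> \<tau>" "\<tau> \<notin> N" for \<tau>
    using wb[OF that] by (auto simp: best_resp_def)
  have w0: "w \<tau> = 0" if "\<tau> < 0 \<or> \<tau> \<in> N" for \<tau> using that by (auto simp: w_def)
  have contx: "continuous_on {0..T} x" for T
  proof (cases "0 \<le> T")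
    case True
    have "continuous_on {0..T} (\<lambda>t. x 0 + integral {0..t} w)"
      by (intro continuous_on_add continuous_on_const indefinite_integral_continuous_1 wint True)
    moreover have "\<And>t. t \<in> {0..T} \<Longrightarrow> x 0 + integral {0..t} w = x t"
      using xw by (metis atLeastAtMost_iff)
    ultimately show ?thesis by (rule continuous_on_eq)
  next
    case False then show ?thesis by simp
  qed
  have xK: "x t \<in> K" if "0 \<le> t" for t
    by (rule invariance[OF K(2,3) x0 contx wint xw N wbK that])
  obtain R where R: "\<forall>y\<in>K. norm y \<le> R" using compact_imp_bounded[OF K(2)] unfolding bounded_iff by blast
  have R0: "R \<ge> 0" using K(1) R norm_ge_zero order_trans by blast
  have wbd: "norm (w \<tau>) \<le> 2 * R" for \<tau>
  proof (cases "0 \<le> \<tau> \<and> \<tau> \<notin> N")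
    case True
    then obtain b where b: "b \<in> K" "w \<tau> = b - x \<tau>" using wbK by blast
    have "norm (w \<tau>) \<le> norm b + norm (x \<tau>)" using b(2) norm_triangle_ineq4 by metis
    moreover have "norm b \<le> R" "norm (x \<tau>) \<le> R" using R b(1) xK True by auto
    ultimately show ?thesis by linarith
  next
    case False then show ?thesis using w0 R0 by auto
  qed
  have wall: "w integrable_on {a..b}" for a b
  proof (rule integrable_all)
    show "\<And>T. 0 \<le> T \<Longrightarrow> w integrable_on {0..T}" by (rule wint)
    fix \<tau> :: real assume "\<tau> < 0" then show "w \<tau> = 0" by (simp add: w_def)
  qed
  obtain NL where NL: "negligible NL" "\<And>\<tau> e. \<tau> \<notin> NL \<Longrightarrow> 0 < e \<Longrightarrow> \<exists>d>0. \<forall>h. 0 < h \<and> h < d \<longrightarrow>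
        norm (integral {\<tau>-h..\<tau>} w /\<^sub>R h - w \<tau>) < e"
    using backward_lebesgue[OF wall] by blast
  have xdiff: "x \<tau> - x \<sigma> = integral {\<sigma>..\<tau>} w" if "0 \<le> \<sigma>" "\<sigma> \<le> \<tau>" for \<sigma> \<tau>
  proof -
    have "0 \<le> \<tau>" using that by linarith
    have "x \<tau> = x 0 + integral {0..\<tau>} w" by (rule xw[OF \<open>0 \<le> \<tau>\<close>])
    moreover have "x \<sigma> = x 0 + integral {0..\<sigma>} w" by (rule xw[OF that(1)])
    moreover have "integral {0..\<sigma>} w + integral {\<sigma>..\<tau>} w = integral {0..\<tau>} w"
      by (rule Henstock_Kurzweil_Integration.integral_combine[OF that wint[OF \<open>0 \<le> \<tau>\<close>]])
    ultimately show ?thesis by (simp add: algebra_simps)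
  qed
  have xlip: "norm (x \<tau> - x \<sigma>) \<le> 2 * R * (\<tau> - \<sigma>)" if "0 \<le> \<sigma>" "\<sigma> \<le> \<tau>" for \<sigma> \<tau>
  proof -
    have "norm (integral {\<sigma>..\<tau>} w) \<le> integral {\<sigma>..\<tau>} (\<lambda>_. 2 * R)"
      by (rule Henstock_Kurzweil_Integration.integral_norm_bound_integral[OF wall]) (auto simp: wbd)
    then show ?thesis using xdiff[OF that] that by (simp add: algebra_simps)
  qed
  define m where "m q = Inf ((\<lambda>y. y \<bullet> q) ` K)" for q
  have bddm: "bdd_below ((\<lambda>y. y \<bullet> q) ` K)" for q
    by (intro bounded_imp_bdd_below compact_imp_bounded compact_continuous_image K(2)) (intro continuous_intros)
  have m_le: "m q \<le> y \<bullet> q" if "y \<in> K" for q y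
    unfolding m_def by (rule cInf_lower[OF imageI[OF that] bddm])
  have m_eq: "m q = y \<bullet> q" if "y \<in> best_resp K q" for q y
    unfolding m_def using that by (intro cInf_eq_minimum) (auto simp: best_resp_def)
  have m_lip: "m q - m q' \<le> R * norm (q - q')" for q q'
  proof -
    obtain y where y: "y \<in> best_resp K q'" using best_resp_nonempty[OF K(1,2)] by blast
    have yK: "y \<in> K" using y by (simp add: best_resp_def)
    have "m q \<le> y \<bullet> q" by (rule m_le[OF yK])
    moreover have "y \<bullet> q = m q' + y \<bullet> (q - q')" using m_eq[OF y] by (simp add: inner_diff_right)
    moreover have "y \<bullet> (q - q') \<le> norm y * norm (q - q')" by (rule norm_cauchy_schwarz)
    moreover have "norm y * norm (q - q') \<le> R * norm (q - q')" using R yK by (intro mult_right_mono) auto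
    ultimately show ?thesis by linarith
  qed
  have contm: "continuous_on UNIV m"
  proof (rule lipschitz_on_continuous_on)
    show "R-lipschitz_on UNIV m"
    proof (rule lipschitz_onI)
      fix q q' :: 'a
      show "dist (m q) (m q') \<le> R * dist q q'"
        using m_lip[of q q'] m_lip[of q' q] by (simp add: dist_real_def dist_norm norm_minus_commute abs_le_iff)
    qed (rule R0)
  qed
  define \<phi> where "\<phi> \<tau> = x \<tau> \<bullet> G (x \<tau>) - m (G (x \<tau>))" for \<tau>
  have contGx: "continuous_on {0..T} (\<lambda>\<tau>. G (x \<tau>))" for T
    by (rule continuous_on_compose2[OF contG contx]) (use xK in auto)
  have contmGx: "continuous_on {0..T} (\<lambda>\<tau>. m (G (x \<tau>)))" for T
    by (rule continuous_on_compose2[OF contm contGx]) auto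
  have contphi: "continuous_on {0..T} \<phi>" for T
    unfolding \<phi>_def by (intro continuous_on_diff continuous_on_inner contx contGx contmGx)
  obtain P where P: "\<forall>y\<in>K. norm (G y) \<le> P"
    using compact_imp_bounded[OF compact_continuous_image[OF contG K(2)]] unfolding bounded_iff by blast
  have P0: "P \<ge> 0" using K(1) P norm_ge_zero order_trans by blast
  have xtK: "xt \<in> K" and xtvi: "\<forall>y\<in>K. (y - xt) \<bullet> G xt \<ge> 0" using xt unfolding solves_VI_def by auto
  have phi_lb: "\<phi> \<tau> \<ge> c * (norm (x \<tau> - xt))\<^sup>2" if "0 \<le> \<tau>" for \<tau>
  proof -
    have "m (G (x \<tau>)) \<le> xt \<bullet> G (x \<tau>)" by (rule m_le[OF xtK])
    moreover have "(x \<tau> - xt) \<bullet> (G (x \<tau>) - G xt) \<ge> c * (norm (x \<tau> - xt))\<^sup>2" using smG(2) xK[OF that] xtK by blast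
    moreover have "(x \<tau> - xt) \<bullet> G xt \<ge> 0" using xtvi xK[OF that] by blast
    moreover have "(x \<tau> - xt) \<bullet> (G (x \<tau>) - G xt) + (x \<tau> - xt) \<bullet> G xt = x \<tau> \<bullet> G (x \<tau>) - xt \<bullet> G (x \<tau>)"
      by (simp add: inner_diff_left inner_diff_right)
    ultimately show ?thesis unfolding \<phi>_def by linarith
  qed
  have phi_A: "\<phi> \<tau> - \<phi> \<sigma> \<le> (x \<tau> - b) \<bullet> G (x \<tau>) - (x \<sigma> - b) \<bullet> G (x \<sigma>)"
    if "b \<in> best_resp K (G (x \<tau>))" for \<tau> \<sigma> b
  proof -
    have "m (G (x \<tau>)) = b \<bullet> G (x \<tau>)" by (rule m_eq[OF that])
    moreover have "m (G (x \<sigma>)) \<le> b \<bullet> G (x \<sigma>)" using that by (intro m_le) (simp add: best_resp_def)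
    ultimately show ?thesis unfolding \<phi>_def by (simp add: inner_diff_left)
  qed
  have phi_eq: "\<phi> \<tau> = (x \<tau> - b) \<bullet> G (x \<tau>)" if "b \<in> best_resp K (G (x \<tau>))" for \<tau> b
    using m_eq[OF that] unfolding \<phi>_def by (simp add: inner_diff_left)
  define C where "C = 2 * L * R + P"
  have C0: "C \<ge> 0" unfolding C_def using lipG(1) R0 P0 by simp
  define q where "q h \<tau> = C * norm ((x \<tau> - x (\<tau> - h)) /\<^sub>R h - w \<tau>)" for h \<tau>
  have pt: "(\<phi> \<tau> - \<phi> (\<tau> - h)) / h + \<phi> \<tau> \<le> q h \<tau>" if h: "0 < h" "h \<le> \<tau>" "\<tau> \<notin> N" for h \<tau>
  proof -
    have t0: "0 \<le> \<tau>" "0 \<le> \<tau> - h" using h by auto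
    obtain b where b: "b \<in> best_resp K (G (x \<tau>))" "w \<tau> = b - x \<tau>" using wb[OF t0(1) h(3)] by blast
    have "(x \<tau> - x (\<tau> - h)) \<bullet> (G (x \<tau>) - G (x (\<tau> - h))) \<ge> c * (norm (x \<tau> - x (\<tau> - h)))\<^sup>2"
      using smG(2) xK[OF t0(1)] xK[OF t0(2)] by blast
    then have mono: "(x \<tau> - x (\<tau> - h)) \<bullet> (G (x \<tau>) - G (x (\<tau> - h))) \<ge> 0"
      using smG(1) by (smt (verit) mult_nonneg_nonneg zero_le_power2)
    let ?e = "(x \<tau> - x (\<tau> - h)) /\<^sub>R h - w \<tau>"
    let ?g = "(G (x \<tau>) - G (x (\<tau> - h))) /\<^sub>R h + G (x \<tau>)"
    have "(\<phi> \<tau> - \<phi> (\<tau> - h)) / h + \<phi> \<tau> \<le> ?e \<bullet> ?g"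
      using danskin_step[OF h(1) phi_A[OF b(1)] phi_eq[OF b(1)] mono] b(2) by simp
    also have "\<dots> \<le> norm ?e * norm ?g" by (rule norm_cauchy_schwarz)
    also have "norm ?g \<le> C"
    proof -
      have "norm (x \<tau> - x (\<tau> - h)) \<le> 2 * R * h" using xlip[OF t0(2), of \<tau>] h(1) by simp
      then have "norm (G (x \<tau>) - G (x (\<tau> - h))) \<le> L * (2 * R * h)"
        using lipG xK[OF t0(1)] xK[OF t0(2)] by (meson mult_left_mono order_trans)
      then have "norm (G (x \<tau>) - G (x (\<tau> - h))) / h \<le> L * (2 * R * h) / h"
        using h(1) by (intro divide_right_mono) auto
      also have "L * (2 * R * h) / h = 2 * L * R" using h(1) by simp
      also have "norm (G (x \<tau>) - G (x (\<tau> - h))) / h = norm ((G (x \<tau>) - G (x (\<tau> - h))) /\<^sub>R h)"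
        using h(1) by (simp add: divide_inverse mult.commute)
      finally have "norm ((G (x \<tau>) - G (x (\<tau> - h))) /\<^sub>R h) \<le> 2 * L * R" .
      moreover have "norm (G (x \<tau>)) \<le> P" using P xK[OF t0(1)] by blast
      ultimately show ?thesis unfolding C_def using norm_triangle_ineq[of "(G (x \<tau>) - G (x (\<tau> - h))) /\<^sub>R h" "G (x \<tau>)"]
        by linarith
    qed
    then have "norm ?e * norm ?g \<le> norm ?e * C" by (intro mult_left_mono) auto
    finally show ?thesis unfolding q_def by (simp add: mult.commute)
  qed

  have ebd: "norm ((x \<tau> - x (\<tau> - h)) /\<^sub>R h - w \<tau>) \<le> 4 * R" if "0 < h" "h \<le> \<tau>" for h \<tau>
  proof -
    have "norm (x \<tau> - x (\<tau> - h)) \<le> 2 * R * h" using xlip[of "\<tau> - h" \<tau>] that by simp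
    then have "norm (x \<tau> - x (\<tau> - h)) / h \<le> 2 * R" using that(1) by (simp add: pos_divide_le_eq algebra_simps)
    moreover have "norm (x \<tau> - x (\<tau> - h)) / h = norm ((x \<tau> - x (\<tau> - h)) /\<^sub>R h)"
      using that(1) by (simp add: divide_inverse mult.commute)
    ultimately have "norm ((x \<tau> - x (\<tau> - h)) /\<^sub>R h) \<le> 2 * R" by simp
    moreover have "norm ((x \<tau> - x (\<tau> - h)) /\<^sub>R h - w \<tau>) \<le> norm ((x \<tau> - x (\<tau> - h)) /\<^sub>R h) + norm (w \<tau>)"
      by (rule norm_triangle_ineq4)
    ultimately show ?thesis using wbd[of \<tau>] by linarith
  qed
  have q0: "q h \<tau> \<ge> 0" for h \<tau> unfolding q_def using C0 by simp
  have qint: "q h integrable_on {s..t}" if "0 < h" "h < s" for h s t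
  proof -
    have c0: "continuous_on {s..t} x" by (rule continuous_on_subset[OF contx[of t]]) (use that in auto)
    have c1: "continuous_on {s..t} (\<lambda>\<tau>. x (\<tau> - h))"
      by (rule continuous_on_compose2[OF contx[of t]]) (use that in \<open>auto intro!: continuous_intros\<close>)
    have "continuous_on {s..t} (\<lambda>\<tau>. (x \<tau> - x (\<tau> - h)) /\<^sub>R h)" by (intro continuous_intros c0 c1)
    then have i1: "(\<lambda>\<tau>. (x \<tau> - x (\<tau> - h)) /\<^sub>R h) integrable_on {s..t}" by (rule integrable_continuous_interval)
    have fi: "(\<lambda>\<tau>. (x \<tau> - x (\<tau> - h)) /\<^sub>R h - w \<tau>) integrable_on {s..t}" by (intro integrable_diff i1 wall)
    have fb: "norm ((x \<tau> - x (\<tau> - h)) /\<^sub>R h - w \<tau>) \<le> 4 * R" if "\<tau> \<in> {s..t}" for \<tau>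
      using ebd[of h \<tau>] that \<open>0 < h\<close> \<open>h < s\<close> by simp
    have "(\<lambda>\<tau>. (x \<tau> - x (\<tau> - h)) /\<^sub>R h - w \<tau>) absolutely_integrable_on {s..t}"
      proof (rule absolutely_integrable_integrable_bound[OF _ fi, of "\<lambda>_. 4 * R"])
      show "\<And>\<tau>. \<tau> \<in> {s..t} \<Longrightarrow> norm ((x \<tau> - x (\<tau> - h)) /\<^sub>R h - w \<tau>) \<le> 4 * R" by (rule fb)
    qed (rule integrable_continuous_interval[OF continuous_on_const])
    then have "(\<lambda>\<tau>. norm ((x \<tau> - x (\<tau> - h)) /\<^sub>R h - w \<tau>)) integrable_on {s..t}"
      by (simp add: absolutely_integrable_on_def)
    from integrable_on_cmult_left[OF this, of C] show ?thesis unfolding q_def by simp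
  qed
  have main: "\<phi> t - \<phi> s + integral {s..t} \<phi> \<le> 0" if st: "0 < s" "s \<le> t" for s t
  proof -
    define hs where "hs k = s / real (k + 2)" for k
    have hs1: "0 < hs k \<and> hs k < s" for k
    proof -
      have r: "1 < real (k + 2)" by simp
      have "0 < hs k" unfolding hs_def using st(1) r by simp
      moreover have "hs k < s / 1" unfolding hs_def using st(1) r by (intro divide_strict_left_mono) auto
      ultimately show ?thesis by simp
    qed
    have hs2: "hs \<longlonglongrightarrow> 0" unfolding hs_def
      using LIMSEQ_ignore_initial_segment[OF lim_const_over_n[of s], of 2] by simp
    define f where "f k \<tau> = (if \<tau> \<in> NL then 0 else q (hs k) \<tau>)" for k \<tau>
    have fint: "f k integrable_on {s..t}" for k
    proof -
      have "q (hs k) integrable_on {s..t}" using qint hs1 by blast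
      then show ?thesis by (rule integrable_spike[OF _ NL(1)]) (simp add: f_def)
    qed
    have fbd: "norm (f k \<tau>) \<le> C * (4 * R)" if "\<tau> \<in> {s..t}" for k \<tau>
    proof -
      have "q (hs k) \<tau> \<le> C * (4 * R)" unfolding q_def
        using ebd[of "hs k" \<tau>] hs1[of k] that C0 by (intro mult_left_mono) auto
      then show ?thesis using q0 C0 R0 unfolding f_def by auto
    qed
    have fconv: "(\<lambda>k. f k \<tau>) \<longlonglongrightarrow> 0" if \<tau>: "\<tau> \<in> {s..t}" for \<tau>
    proof (cases "\<tau> \<in> NL")
      case True then show ?thesis by (simp add: f_def)
    next
      case False
      show ?thesis
      proof (rule LIMSEQ_I)
        fix e :: real assume "0 < e"
        then have "0 < e / (C + 1)" using C0 by simp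
        from NL(2)[OF False this] obtain d where d: "d > 0"
          "\<forall>h. 0 < h \<and> h < d \<longrightarrow> norm (integral {\<tau>-h..\<tau>} w /\<^sub>R h - w \<tau>) < e / (C + 1)"
          by blast
        obtain k0 where k0: "\<forall>k\<ge>k0. norm (hs k - 0) < d" using LIMSEQ_D[OF hs2 d(1)] by blast
        show "\<exists>no. \<forall>k\<ge>no. norm (f k \<tau> - 0) < e"
        proof (intro exI allI impI)
          fix k assume "k0 \<le> k"
          then have hk: "0 < hs k" "hs k < d" using k0 hs1[of k] by auto
          have "hs k < s" using hs1[of k] by simp
          then have "x \<tau> - x (\<tau> - hs k) = integral {\<tau> - hs k..\<tau>} w"
            using xdiff[of "\<tau> - hs k" \<tau>] \<tau> hk(1) by simp
          then have "norm ((x \<tau> - x (\<tau> - hs k)) /\<^sub>R hs k - w \<tau>) < e / (C + 1)" using d(2) hk by auto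
          then have "q (hs k) \<tau> \<le> C * (e / (C + 1))" unfolding q_def using C0 by (intro mult_left_mono) auto
          also have "C * (e / (C + 1)) < e" using C0 \<open>0 < e\<close> by (simp add: field_simps)
          finally show "norm (f k \<tau> - 0) < e" using False q0[of "hs k" \<tau>] unfolding f_def by simp
        qed
      qed
    qed
    have dc: "(\<lambda>k. integral {s..t} (f k)) \<longlonglongrightarrow> integral {s..t} (\<lambda>_. 0::real)"
      by (rule dominated_convergence(2)[where h="\<lambda>_. C * (4 * R)" and g="\<lambda>_. 0", OF fint _ fbd fconv]) (rule integrable_continuous_interval[OF continuous_on_const])
    have "integral {s..t} (q (hs k)) = integral {s..t} (f k)" for k
      by (rule integral_spike[OF NL(1)]) (simp add: f_def)
    then have qlim: "(\<lambda>k. integral {s..t} (q (hs k))) \<longlonglongrightarrow> 0" using dc by simp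
    have pt': "(\<phi> \<tau> - \<phi> (\<tau> - h)) / h + \<phi> \<tau> \<le> q h \<tau>" if "0 < h" "h < s" "\<tau> \<in> {s..t} - N" for h \<tau>
      using pt[of h \<tau>] that by auto
    have qint': "q h integrable_on {s..t}" if "0 < h" "h < s" for h using qint that by blast
    show ?thesis by (rule lyap_integral[OF contphi st N pt' qint' hs1 hs2 qlim])
  qed
  have phi0: "\<phi> \<tau> \<ge> 0" if "0 \<le> \<tau>" for \<tau>
  proof -
    have "0 \<le> c * (norm (x \<tau> - xt))\<^sup>2" using smG(1) by simp
    then show ?thesis using phi_lb[OF that] by linarith
  qed
  have phiint: "\<phi> integrable_on {s..t}" if "0 \<le> s" for s t
    by (rule integrable_continuous_interval[OF continuous_on_subset[OF contphi[of t]]]) (use that in auto)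
  have dec: "\<phi> t \<le> \<phi> s" if "0 < s" "s \<le> t" for s t
  proof -
    have "0 \<le> integral {s..t} \<phi>" by (rule integral_nonneg[OF phiint]) (use that phi0 in auto)
    then show ?thesis using main[OF that] by linarith
  qed
  have bound: "t * \<phi> t \<le> \<phi> 1" if "1 \<le> t" for t
  proof -
    have "integral {1..t} (\<lambda>_. \<phi> t) \<le> integral {1..t} \<phi>"
      by (rule integral_le[OF _ phiint]) (use that in \<open>auto intro!: dec\<close>)
    moreover have "integral {1..t} (\<lambda>_. \<phi> t) = (t - 1) * \<phi> t" using that by simp
    moreover have "(t - 1) * \<phi> t = t * \<phi> t - \<phi> t" by (simp add: algebra_simps)
    ultimately show ?thesis using main[of 1 t] that by linarith
  qed
  have nb: "norm (x t - xt) \<le> sqrt (\<phi> 1 / c * inverse t)" if "1 \<le> t" for t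
  proof -
    have "c * (norm (x t - xt))\<^sup>2 \<le> \<phi> t" using phi_lb that by simp
    also have "\<phi> t \<le> \<phi> 1 / t" using bound[OF that] that by (simp add: pos_le_divide_eq mult.commute)
    finally have a: "c * (norm (x t - xt))\<^sup>2 \<le> \<phi> 1 / t" .
    have a': "(norm (x t - xt))\<^sup>2 * c \<le> \<phi> 1 / t" using a by (simp add: mult.commute)
    have "(norm (x t - xt))\<^sup>2 \<le> (\<phi> 1 / t) / c" unfolding pos_le_divide_eq[OF smG(1)] by (rule a')
    also have "(\<phi> 1 / t) / c = \<phi> 1 / c * inverse t" using that smG(1) by (simp add: field_simps)
    finally have "(norm (x t - xt))\<^sup>2 \<le> \<phi> 1 / c * inverse t" .
    then show ?thesis by (rule real_le_rsqrt)
  qed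
  have l1: "((\<lambda>t::real. inverse t) \<longlongrightarrow> 0) at_top" by (rule tendsto_inverse_0_at_top[OF filterlim_ident])
  have l2: "((\<lambda>t. \<phi> 1 / c * inverse t) \<longlongrightarrow> \<phi> 1 / c * 0) at_top" by (rule tendsto_mult[OF tendsto_const l1])
  have l3: "((\<lambda>t. sqrt (\<phi> 1 / c * inverse t)) \<longlongrightarrow> sqrt (\<phi> 1 / c * 0)) at_top" by (rule tendsto_real_sqrt[OF l2])
  then have l4: "((\<lambda>t. sqrt (\<phi> 1 / c * inverse t)) \<longlongrightarrow> 0) at_top" by simp
  have ev: "eventually (\<lambda>t. norm (x t - xt) \<le> sqrt (\<phi> 1 / c * inverse t)) at_top"
    by (rule eventually_at_top_linorderI[of 1]) (rule nb)
  have "((\<lambda>t. x t - xt) \<longlongrightarrow> 0) at_top" by (rule Lim_null_comparison[OF ev l4])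
  then show ?thesis by (rule LIM_zero_cancel)
qed


theorem theorem3:
  fixes K :: "(real ^ 'n) set" and F \<delta> :: "real ^ 'n \<Rightarrow> real ^ 'n"
  assumes "K \<noteq> {}" and "compact K" and "convex K"
    and "C1_on K F" and "strongly_monotone_on K F"
    and "C1_on K (\<lambda>x. F x + \<delta> x)" and "strongly_monotone_on K (\<lambda>x. F x + \<delta> x)"
  shows "\<exists>xt. solves_VI K (\<lambda>x. F x + \<delta> x) xt
          \<and> (\<forall>x. caratheodory_sol K (\<lambda>x. F x + \<delta> x) x \<longrightarrow> (x \<longlongrightarrow> xt) at_top)
          \<and> (\<exists>\<alpha>1. class_K_inf \<alpha>1 \<and>
               (\<forall>xs. solves_VI K F xs \<longrightarrow>
                  norm (xs - xt) \<le> inv_into {0..} \<alpha>1 (hfun K F \<delta> xt)))"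
proof -
  let ?G = "\<lambda>x. F x + \<delta> x"
  have contG: "continuous_on K ?G" by (rule C1_cont[OF assms(6)])
  obtain L where L: "L \<ge> 0" "\<forall>y\<in>K. \<forall>z\<in>K. norm (?G y - ?G z) \<le> L * norm (y - z)"
    using C1_lip[OF assms(6,2,3)] by blast
  obtain c where c: "c > 0" "\<forall>y\<in>K. \<forall>z\<in>K. (y - z) \<bullet> (?G y - ?G z) \<ge> c * (norm (y - z))\<^sup>2"
    using assms(7) unfolding strongly_monotone_on_def by blast
  obtain xt where xt: "solves_VI K ?G xt" using VI_exists[OF assms(1,2,3) contG] by blast
  have conv: "\<forall>x. caratheodory_sol K ?G x \<longrightarrow> (x \<longlongrightarrow> xt) at_top"
    using traj_converges[OF assms(1,2,3) contG L c xt] by blast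
  show ?thesis using xt conv bound_part[OF assms(1,2,5) xt] by blast
qed

end
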